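(* For every non-anticipative policy $\hat{\mathbf{a}}\in\mathbb{A}_{\mathbb{G}}$ and approximations $\hat J_k$, the functions $M_1$ and $M_2$ defined below are dual feasible penalties, i.e. $M_1,M_2\in\mathcal{M}_{\mathbb{G}}(0)$; consequently $(\mathcal{L}M_1)(\phi_0,W_0)$ and $(\mathcal{L}M_2)(\phi_0,W_0)$ are upper bounds on $H_0(\phi_0,W_0)$.
   Context: Discrete-time portfolio model with $n$ risky assets, market state $\phi_k\in\mathbb{R}^m$, wealth $W_k$, times $k=0,\dots,K$, step $\delta>0$. $\{(Z_k,\tilde Z_k)\}_{k=1}^K$ are i.i.d. standard Gaussian vectors ($Z_k\in\mathbb{R}^n$, $\tilde Z_k\in\mathbb{R}^d$, independent), $\mathcal{G}_k=\sigma(Z_j,\tilde Z_j,j\le k)$, $\mathbb{G}=\{\mathcal{G}_k\}$. Dynamics: $\phi_{k+1}=\phi_k+\mu^\phi_k\delta+\sigma^{\phi,1}_k\sqrt\delta Z_{k+1}+\sigma^{\phi,2}_k\sqrt\delta\tilde Z_{k+1}$; $\log R_{k+1}=(\mu_k-\tfrac12\sigma_k^2)\delta+\sigma_k\sqrt\delta Z_{k+1}$ (componentwise, $\sigma_k^2$ = diagonal of $\sigma_k\sigma_k^\top$); $W_{k+1}=W_kR_f+(R_{k+1}-R_f\mathbf{1}_n)^\top\Pi_k-C_k$, where $\mu^\phi_k=\mu^\phi(k,\phi_k)$, $\sigma^{\phi,1}_k=\sigma^{\phi,1}(k,\phi_k)\in\mathbb{R}^{m\times n}$, $\sigma^{\phi,2}_k=\sigma^{\phi,2}(k,\phi_k)\in\mathbb{R}^{m\times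 d}$, $\mu_k=\mu(k,\phi_k)$, $\sigma_k=\sigma(k,\phi_k)\in\mathbb{R}^{n\times n}$, $R_f=1+r_f\delta$. Controls $a_k=(\Pi_k,C_k)$ (dollar amounts in risky assets and consumption) with constraints $\Pi_k\ge0$, $C_k\ge0$, $C_k\le R_f(W_k-\mathbf{1}_n^\top\Pi_k)$. $\mathbb{A}$: all such control sequences $\mathbf{a}=(a_0,\dots,a_{K-1})$ (possibly depending on the whole of $(\mathbf{Z},\tilde{\mathbf{Z}})$); $\mathbb{A}_{\mathbb{G}}$: those with $a_k$ $\mathcal{G}_k$-measurable. Utility $U(x)=x^{1-\gamma}/(1-\gamma)$, $\gamma>0$, weights $\alpha\in[0,1]$, discount $\beta$. $H_0(\phi_0,W_0)=\sup_{\mathbf{a}\in\mathbb{A}_{\mathbb{G}}}\mathbb{E}[\sum_{k=0}^{K-1}\alpha\beta^{k\delta}U(C_k)\delta+(1-\alpha)\beta^{K\delta}U(W_K)\mid\phi_0,W_0]$. $\mathcal{M}_{\mathbb{G}}(0)$: functions $M(\mathbf{a},\mathbf{Z},\tilde{\mathbf{Z}})$ with $\mathbb{E}[M(\mathbf{a},\mathbf{Z},\tilde{\mathbf{Z}})\mid\phi_0,W_0]\le0$ for all $(\phi_0,W_0)$ and all $\mathbf{a}\in\mathbb{A}_{\mathbb{G}}$. $(\mathcal{L}M)(\phi_0,W_0)=\mathbb{E}[\sup_{\mathbf{a}\in\mathbb{A}}\{\sum_{k=0}^{K-1}\alpha\beta^{k\delta}U(C_k)\delta+(1-\alpha)\beta^{K\delta}U(W_K)-M(\mathbf{a},\mathbf{Z},\tilde{\mathbf{Z}})\}\mid\phi_0,W_0]$.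 Penalty construction: let $\hat J_k:\mathbb{R}^m\to\mathbb{R}$ be approximate functions with (generalized) gradients $\nabla_\phi\hat J_k$ (e.g. slopes of piecewise linear interpolants), and fix $\hat{\mathbf{a}}=(\hat\Pi_k,\hat C_k)\in\mathbb{A}_{\mathbb{G}}$. Along a realization, $\bar\phi_k$ is the market state, $\bar R_k$ the return, $\bar\sigma_k,\bar\sigma^{\phi,1}_k,\bar\sigma^{\phi,2}_k$ the coefficients at $\bar\phi_k$, $\bar W_k$ the wealth and $\bar\Pi_k,\bar C_k$ the controls under $\hat{\mathbf{a}}$ from $(\phi_0,W_0)$. Set $\Psi^1_{k+1}=\bar W_k^{1-\gamma}\nabla_\phi\hat J_k(\bar\phi_k)^\top\bar\sigma^{\phi,1}_k\sqrt\delta Z_{k+1}$, $\Psi^2_{k+1}=\bar W_k^{1-\gamma}\nabla_\phi\hat J_k(\bar\phi_k)^\top\bar\sigma^{\phi,2}_k\sqrt\delta\tilde Z_{k+1}$, $\Psi^3_{k+1}=(1-\gamma)\bar W_k^{-\gamma}\hat J_k(\bar\phi_k)\Pi_k^\top\bar\sigma_k\sqrt\delta Z_{k+1}$, and $M_1=\sum_{k=0}^{K-1}\beta^{k\delta}[\Psi^1_{k+1}+\Psi^2_{k+1}+\Psi^3_{k+1}]$. For $k\ge1$ let $\breve\Psi^1_{k+1}=\big[\bar W_k^{1-\gamma}+(1-\gamma)\bar W_k^{-\gamma}\big((\bar R_k-R_f\mathbf{1}_n)^\top(\Pi_{k-1}-\bar\Pi_{k-1})-(C_{k-1}-\bar C_{k-1})\big)\big]\nabla_\phi\hat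 J_k(\bar\phi_k)^\top\bar\sigma^{\phi,1}_k\sqrt\delta Z_{k+1}$ and $\breve\Psi^2_{k+1}$ the same with $\bar\sigma^{\phi,2}_k\sqrt\delta\tilde Z_{k+1}$ in place of $\bar\sigma^{\phi,1}_k\sqrt\delta Z_{k+1}$; for $k=0$ let $\breve\Psi^i_1=\Psi^i_1$. Then $M_2=\sum_{k=0}^{K-1}\beta^{k\delta}[\breve\Psi^1_{k+1}+\breve\Psi^2_{k+1}+\Psi^3_{k+1}]$. *)

theory Defs
  imports "HOL-Probability.Probability"
begin

text \<open>Discrete-time portfolio model. Index types: 'n = risky assets, 'm = market state,
  'd = extra noise dimension. Matrices in R^{p x q} are rendered as real^'q^'p.\<close>

record ('n, 'm, 'd) market =
  horizon :: nat
  dt      :: real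
  rfree   :: real
  muphi   :: "nat \<Rightarrow> real^'m \<Rightarrow> real^'m"
  sigphi1 :: "nat \<Rightarrow> real^'m \<Rightarrow> real^'n^'m"
  sigphi2 :: "nat \<Rightarrow> real^'m \<Rightarrow> real^'d^'m"
  drift   :: "nat \<Rightarrow> real^'m \<Rightarrow> real^'n"
  vol     :: "nat \<Rightarrow> real^'m \<Rightarrow> real^'n^'n"

definition Rf :: "('n::finite, 'm::finite, 'd::finite) market \<Rightarrow> real" where
  "Rf P = 1 + rfree P * dt P"

definition gauss_vec :: "(real^'i::finite) measure" where
  "gauss_vec = distr (PiM UNIV (\<lambda>_::'i. density lborel std_normal_density)) borel vec_lambda"

text \<open>Sample points: omega k = (Z_k, Ztilde_k) for k = 1..K (i.i.d.).\<close>
type_synonym ('n, 'd) sample = "nat \<Rightarrow> (real^'n) \<times> (real^'d)"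

definition noise_space :: "nat \<Rightarrow> ('n::finite, 'd::finite) sample measure" where
  "noise_space K = PiM {1..K} (\<lambda>_. gauss_vec \<Otimes>\<^sub>M gauss_vec)"

definition filt :: "nat \<Rightarrow> nat \<Rightarrow> ('n::finite, 'd::finite) sample measure" where
  "filt K k = vimage_algebra (space (noise_space K)) (\<lambda>\<omega>. restrict \<omega> {1..k})
      (PiM {1..k} (\<lambda>_. gauss_vec \<Otimes>\<^sub>M gauss_vec))"

fun state :: "('n::finite, 'm::finite, 'd::finite) market \<Rightarrow> real^'m \<Rightarrow> ('n, 'd) sample \<Rightarrow> nat \<Rightarrow> real^'m" where
  "state P \<phi>0 \<omega> 0 = \<phi>0"
| "state P \<phi>0 \<omega> (Suc k) =
     (let \<phi> = state P \<phi>0 \<omega> k; \<delta> = dt P in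
      \<phi> + \<delta> *\<^sub>R muphi P k \<phi> + sqrt \<delta> *\<^sub>R (sigphi1 P k \<phi> *v fst (\<omega> (Suc k)))
        + sqrt \<delta> *\<^sub>R (sigphi2 P k \<phi> *v snd (\<omega> (Suc k))))"

text \<open>Gross returns R_k (k >= 1); the value at k = 0 is unused.\<close>
fun ret :: "('n::finite, 'm::finite, 'd::finite) market \<Rightarrow> real^'m \<Rightarrow> ('n, 'd) sample \<Rightarrow> nat \<Rightarrow> real^'n" where
  "ret P \<phi>0 \<omega> 0 = 0"
| "ret P \<phi>0 \<omega> (Suc k) =
     (let \<phi> = state P \<phi>0 \<omega> k; \<delta> = dt P in
      (\<chi> i. exp ((drift P k \<phi> $ i - (\<Sum>j\<in>UNIV. (vol P k \<phi> $ i $ j)\<^sup>2) / 2) * \<delta>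
                 + sqrt \<delta> * ((vol P k \<phi> *v fst (\<omega> (Suc k))) $ i))))"

text \<open>A control sequence: a k omega = (Pi_k, C_k).\<close>
type_synonym ('n, 'd) policy = "nat \<Rightarrow> ('n, 'd) sample \<Rightarrow> (real^'n) \<times> real"

fun wealth :: "('n::finite, 'm::finite, 'd::finite) market \<Rightarrow> real^'m \<Rightarrow> real \<Rightarrow> ('n, 'd) policy
                 \<Rightarrow> ('n, 'd) sample \<Rightarrow> nat \<Rightarrow> real" where
  "wealth P \<phi>0 W0 a \<omega> 0 = W0"
| "wealth P \<phi>0 W0 a \<omega> (Suc k) =
     wealth P \<phi>0 W0 a \<omega> k * Rf P
     + (\<Sum>i\<in>UNIV. (ret P \<phi>0 \<omega> (Suc k) $ i - Rf P) * fst (a k \<omega>) $ i) - snd (a k \<omega>)"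

definition feasible_path :: "('n::finite, 'm::finite, 'd::finite) market \<Rightarrow> real^'m \<Rightarrow> real
                 \<Rightarrow> ('n, 'd) policy \<Rightarrow> ('n, 'd) sample \<Rightarrow> bool" where
  "feasible_path P \<phi>0 W0 a \<omega> \<longleftrightarrow>
     (\<forall>k < horizon P. (\<forall>i. fst (a k \<omega>) $ i \<ge> 0) \<and> snd (a k \<omega>) \<ge> 0 \<and>
        snd (a k \<omega>) \<le> Rf P * (wealth P \<phi>0 W0 a \<omega> k - (\<Sum>i\<in>UNIV. fst (a k \<omega>) $ i)))"

definition Adm :: "('n::finite, 'm::finite, 'd::finite) market \<Rightarrow> real^'m \<Rightarrow> real \<Rightarrow> ('n, 'd) policy set" where
  "Adm P \<phi>0 W0 = {a. \<forall>\<omega>\<in>space (noise_space (horizon P)). feasible_path P \<phi>0 W0 a \<omega>}"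

definition AdmG :: "('n::finite, 'm::finite, 'd::finite) market \<Rightarrow> real^'m \<Rightarrow> real \<Rightarrow> ('n, 'd) policy set" where
  "AdmG P \<phi>0 W0 = {a \<in> Adm P \<phi>0 W0.
      \<forall>k < horizon P. a k \<in> measurable (filt (horizon P) k) (borel :: ((real^'n) \<times> real) measure)}"

definition U :: "real \<Rightarrow> real \<Rightarrow> real" where
  "U \<gamma> x = x powr (1 - \<gamma>) / (1 - \<gamma>)"

definition reward :: "('n::finite, 'm::finite, 'd::finite) market \<Rightarrow> real \<Rightarrow> real \<Rightarrow> real
     \<Rightarrow> real^'m \<Rightarrow> real \<Rightarrow> ('n, 'd) policy \<Rightarrow> ('n, 'd) sample \<Rightarrow> real" where
  "reward P \<alpha> \<beta> \<gamma> \<phi>0 W0 a \<omega> =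
     (\<Sum>k<horizon P. \<alpha> * \<beta> powr (real k * dt P) * U \<gamma> (snd (a k \<omega>)) * dt P)
     + (1 - \<alpha>) * \<beta> powr (real (horizon P) * dt P) * U \<gamma> (wealth P \<phi>0 W0 a \<omega> (horizon P))"

definition penalty1 :: "('n::finite, 'm::finite, 'd::finite) market \<Rightarrow> real \<Rightarrow> real
     \<Rightarrow> (nat \<Rightarrow> real^'m \<Rightarrow> real) \<Rightarrow> (nat \<Rightarrow> real^'m \<Rightarrow> real^'m) \<Rightarrow> ('n, 'd) policy
     \<Rightarrow> real^'m \<Rightarrow> real \<Rightarrow> ('n, 'd) policy \<Rightarrow> ('n, 'd) sample \<Rightarrow> real" where
  "penalty1 P \<beta> \<gamma> J gJ ahat \<phi>0 W0 a \<omega> =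
     (\<Sum>k<horizon P.
        (let \<delta> = dt P; \<phi> = state P \<phi>0 \<omega> k; Wb = wealth P \<phi>0 W0 ahat \<omega> k;
             z = fst (\<omega> (Suc k)); zt = snd (\<omega> (Suc k));
             \<Psi>1 = Wb powr (1 - \<gamma>) * (gJ k \<phi> \<bullet> (sigphi1 P k \<phi> *v (sqrt \<delta> *\<^sub>R z)));
             \<Psi>2 = Wb powr (1 - \<gamma>) * (gJ k \<phi> \<bullet> (sigphi2 P k \<phi> *v (sqrt \<delta> *\<^sub>R zt)));
             \<Psi>3 = (1 - \<gamma>) * Wb powr (- \<gamma>) * J k \<phi> * (fst (a k \<omega>) \<bullet> (vol P k \<phi> *v (sqrt \<delta> *\<^sub>R z)))
         in \<beta> powr (real k * \<delta>) * (\<Psi>1 + \<Psi>2 + \<Psi>3)))"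

definition penalty2 :: "('n::finite, 'm::finite, 'd::finite) market \<Rightarrow> real \<Rightarrow> real
     \<Rightarrow> (nat \<Rightarrow> real^'m \<Rightarrow> real) \<Rightarrow> (nat \<Rightarrow> real^'m \<Rightarrow> real^'m) \<Rightarrow> ('n, 'd) policy
     \<Rightarrow> real^'m \<Rightarrow> real \<Rightarrow> ('n, 'd) policy \<Rightarrow> ('n, 'd) sample \<Rightarrow> real" where
  "penalty2 P \<beta> \<gamma> J gJ ahat \<phi>0 W0 a \<omega> =
     (\<Sum>k<horizon P.
        (let \<delta> = dt P; \<phi> = state P \<phi>0 \<omega> k; Wb = wealth P \<phi>0 W0 ahat \<omega> k;
             z = fst (\<omega> (Suc k)); zt = snd (\<omega> (Suc k));
             fac = (if k = 0 then Wb powr (1 - \<gamma>)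
                    else Wb powr (1 - \<gamma>) + (1 - \<gamma>) * Wb powr (- \<gamma>) *
                      ((\<Sum>i\<in>UNIV. (ret P \<phi>0 \<omega> k $ i - Rf P) *
                           (fst (a (k - 1) \<omega>) $ i - fst (ahat (k - 1) \<omega>) $ i))
                       - (snd (a (k - 1) \<omega>) - snd (ahat (k - 1) \<omega>))));
             \<Psi>1 = fac * (gJ k \<phi> \<bullet> (sigphi1 P k \<phi> *v (sqrt \<delta> *\<^sub>R z)));
             \<Psi>2 = fac * (gJ k \<phi> \<bullet> (sigphi2 P k \<phi> *v (sqrt \<delta> *\<^sub>R zt)));
             \<Psi>3 = (1 - \<gamma>) * Wb powr (- \<gamma>) * J k \<phi> * (fst (a k \<omega>) \<bullet> (vol P k \<phi> *v (sqrt \<delta> *\<^sub>R z)))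
         in \<beta> powr (real k * \<delta>) * (\<Psi>1 + \<Psi>2 + \<Psi>3)))"

text \<open>Dual feasibility at (phi0, W0): E[M(a,Z,Zt)] <= 0 for every a in A_G, with the
  expectation understood in the extended sense E[M^+] <= E[M^-].\<close>
definition dual_feasible :: "('n::finite, 'm::finite, 'd::finite) market \<Rightarrow> real^'m \<Rightarrow> real
     \<Rightarrow> (('n, 'd) policy \<Rightarrow> ('n, 'd) sample \<Rightarrow> real) \<Rightarrow> bool" where
  "dual_feasible P \<phi>0 W0 M \<longleftrightarrow>
     (\<forall>a \<in> AdmG P \<phi>0 W0.
        (\<integral>\<^sup>+\<omega>. ennreal (M a \<omega>) \<partial>noise_space (horizon P))
          \<le> (\<integral>\<^sup>+\<omega>. ennreal (- M a \<omega>) \<partial>noise_space (horizon P)))"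

definition H0 :: "('n::finite, 'm::finite, 'd::finite) market \<Rightarrow> real \<Rightarrow> real \<Rightarrow> real
     \<Rightarrow> real^'m \<Rightarrow> real \<Rightarrow> real" where
  "H0 P \<alpha> \<beta> \<gamma> \<phi>0 W0 =
     (SUP a \<in> AdmG P \<phi>0 W0. \<integral>\<omega>. reward P \<alpha> \<beta> \<gamma> \<phi>0 W0 a \<omega> \<partial>noise_space (horizon P))"

definition inner_sup :: "('n::finite, 'm::finite, 'd::finite) market \<Rightarrow> real \<Rightarrow> real \<Rightarrow> real
     \<Rightarrow> real^'m \<Rightarrow> real \<Rightarrow> (('n, 'd) policy \<Rightarrow> ('n, 'd) sample \<Rightarrow> real) \<Rightarrow> ('n, 'd) sample \<Rightarrow> real" where
  "inner_sup P \<alpha> \<beta> \<gamma> \<phi>0 W0 M \<omega> =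
     (SUP a \<in> Adm P \<phi>0 W0. reward P \<alpha> \<beta> \<gamma> \<phi>0 W0 a \<omega> - M a \<omega>)"

definition LM :: "('n::finite, 'm::finite, 'd::finite) market \<Rightarrow> real \<Rightarrow> real \<Rightarrow> real
     \<Rightarrow> real^'m \<Rightarrow> real \<Rightarrow> (('n, 'd) policy \<Rightarrow> ('n, 'd) sample \<Rightarrow> real) \<Rightarrow> real" where
  "LM P \<alpha> \<beta> \<gamma> \<phi>0 W0 M = (\<integral>\<omega>. inner_sup P \<alpha> \<beta> \<gamma> \<phi>0 W0 M \<omega> \<partial>noise_space (horizon P))"

definition dual_bound_regular :: "('n::finite, 'm::finite, 'd::finite) market \<Rightarrow> real \<Rightarrow> real \<Rightarrow> real
     \<Rightarrow> real^'m \<Rightarrow> real \<Rightarrow> (('n, 'd) policy \<Rightarrow> ('n, 'd) sample \<Rightarrow> real) \<Rightarrow> bool" where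
  "dual_bound_regular P \<alpha> \<beta> \<gamma> \<phi>0 W0 M \<longleftrightarrow>
     (\<forall>a \<in> AdmG P \<phi>0 W0. integrable (noise_space (horizon P)) (reward P \<alpha> \<beta> \<gamma> \<phi>0 W0 a)) \<and>
     (\<forall>\<omega> \<in> space (noise_space (horizon P)).
        bdd_above ((\<lambda>a. reward P \<alpha> \<beta> \<gamma> \<phi>0 W0 a \<omega> - M a \<omega>) ` Adm P \<phi>0 W0)) \<and>
     integrable (noise_space (horizon P)) (inner_sup P \<alpha> \<beta> \<gamma> \<phi>0 W0 M)"

end

theory Submission
  imports Defs
begin


abbreviation "SND \<equiv> density lborel std_normal_density"

lemma prob_SND: "prob_space SND"
  by (rule prob_space_normal_density) simp

lemma vec_lambda_meas: "(vec_lambda :: ('i::finite \<Rightarrow> real) \<Rightarrow> real^'i) \<in> measurable (PiM UNIV (\<lambda>_. SND)) borel"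
proof -
  have "(\<lambda>x. (vec_lambda x :: real^'i) \<bullet> b) \<in> borel_measurable (PiM UNIV (\<lambda>_. SND))" if "b \<in> Basis" for b
  proof -
    from that obtain i where b: "b = axis i 1" by (auto simp: Basis_vec_def)
    have "(\<lambda>x. x i) \<in> measurable (PiM UNIV (\<lambda>_::'i. SND)) SND"
      by (rule measurable_component_singleton) simp
    then have "(\<lambda>x. x i) \<in> borel_measurable (PiM UNIV (\<lambda>_::'i. SND))"
      by (subst (asm) measurable_cong_sets[OF refl, where N'=borel]) auto
    then show ?thesis by (simp add: b inner_axis)
  qed
  then show ?thesis by (subst borel_measurable_euclidean_space) auto
qed

lemma prob_gauss: "prob_space (gauss_vec :: (real^'i::finite) measure)"
proof -
  interpret product_prob_space "\<lambda>_::'i. SND" UNIV by (simp add: product_prob_space_def product_prob_space_axioms_def prob_SND product_sigma_finite_def prob_space_imp_sigma_finite)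
  show ?thesis unfolding gauss_vec_def
    by (rule prob_space.prob_space_distr[OF _ vec_lambda_meas]) (rule P.prob_space_axioms)
qed

lemma gauss_comp: "integrable (gauss_vec :: (real^'i::finite) measure) (\<lambda>x. x $ i) \<and> integral\<^sup>L gauss_vec (\<lambda>x::real^'i. x $ i) = 0"
proof -
  interpret product_prob_space "\<lambda>_::'i. SND" UNIV by (simp add: product_prob_space_def product_prob_space_axioms_def prob_SND product_sigma_finite_def prob_space_imp_sigma_finite)
  have m: "(\<lambda>x::real^'i. x $ i) \<in> borel_measurable borel" by simp
  have c: "distr (PiM UNIV (\<lambda>_::'i. SND)) SND (\<lambda>\<omega>. \<omega> i) = SND" using PiM_component[of i] by simp
  have mc: "(\<lambda>\<omega>. \<omega> i) \<in> measurable (PiM UNIV (\<lambda>_::'i. SND)) SND" by (rule measurable_component_singleton) simp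
  have i1: "integrable SND (\<lambda>x. x)"
    using integrable_std_normal_moment[of 1] by (subst integrable_density) auto
  have i2: "integral\<^sup>L SND (\<lambda>x. x) = 0"
    using integral_std_normal_moment_odd[of 0] by (subst integral_density) auto
  have "integrable (PiM UNIV (\<lambda>_::'i. SND)) (\<lambda>\<omega>. \<omega> i)"
    using i1 by (subst (asm) c[symmetric]) (simp add: integrable_distr_eq[OF mc])
  moreover have "integral\<^sup>L (PiM UNIV (\<lambda>_::'i. SND)) (\<lambda>\<omega>. \<omega> i) = 0"
    using i2 by (subst (asm) c[symmetric]) (simp add: integral_distr[OF mc])
  ultimately show ?thesis unfolding gauss_vec_def
    by (simp add: integrable_distr_eq[OF vec_lambda_meas m] integral_distr[OF vec_lambda_meas m])
qed

lemma distr_pair_snd':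
  assumes "prob_space M1" "sigma_finite_measure M2"
  shows "distr (M1 \<Otimes>\<^sub>M M2) M2 snd = M2"
proof (intro measure_eqI)
  interpret M1: prob_space M1 by fact
  interpret M2: sigma_finite_measure M2 by fact
  interpret pair_sigma_finite M1 M2 by standard
  fix A assume A: "A \<in> sets (distr (M1 \<Otimes>\<^sub>M M2) M2 snd)"
  from A have "emeasure (distr (M1 \<Otimes>\<^sub>M M2) M2 snd) A = emeasure (M1 \<Otimes>\<^sub>M M2) (space M1 \<times> A)"
    by (auto simp add: emeasure_distr space_pair_measure dest: sets.sets_into_space intro!: arg_cong2[where f=emeasure])
  moreover have "emeasure (M1 \<Otimes>\<^sub>M M2) (space M1 \<times> A) = emeasure M1 (space M1) * emeasure M2 A"
    using A by (intro M2.emeasure_pair_measure_Times) auto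
  ultimately show "emeasure (distr (M1 \<Otimes>\<^sub>M M2) M2 snd) A = emeasure M2 A"
    by (simp add: M1.emeasure_space_1)
qed simp

abbreviation "NN \<equiv> (gauss_vec \<Otimes>\<^sub>M gauss_vec) :: ((real^'n::finite) \<times> (real^'d::finite)) measure"

lemma prob_NN: "prob_space NN"
  by (intro prob_space_pair prob_gauss)

lemma NN_fst: fixes i :: "'n::finite" shows "integrable (NN::((real^'n) \<times> (real^'d::finite)) measure) (\<lambda>y. fst y $ i) \<and> integral\<^sup>L (NN::((real^'n) \<times> (real^'d)) measure) (\<lambda>y. fst y $ i) = 0"
proof -
  interpret prob_space "gauss_vec :: (real^'d::finite) measure" by (rule prob_gauss)
  have e: "distr (NN::((real^'n) \<times> (real^'d)) measure) gauss_vec fst = gauss_vec" by (rule distr_pair_fst)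
  have m: "(\<lambda>x::real^'n. x $ i) \<in> borel_measurable gauss_vec" by (simp add: gauss_vec_def)
  have mf: "fst \<in> measurable (NN::((real^'n) \<times> (real^'d)) measure) gauss_vec" by simp
  show ?thesis using gauss_comp[of i]
    by (subst (asm) (1 2) e[symmetric]) (simp add: integrable_distr_eq[OF mf m] integral_distr[OF mf m])
qed

lemma NN_snd: fixes i :: "'d::finite" shows "integrable (NN::((real^'n::finite) \<times> (real^'d)) measure) (\<lambda>y. snd y $ i) \<and> integral\<^sup>L (NN::((real^'n) \<times> (real^'d)) measure) (\<lambda>y. snd y $ i) = 0"
proof -
  have m: "(\<lambda>x::real^'d. x $ i) \<in> borel_measurable gauss_vec" by (simp add: gauss_vec_def)
  have e: "distr (NN::((real^'n::finite) \<times> (real^'d)) measure) gauss_vec snd = gauss_vec"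
    by (rule distr_pair_snd') (auto intro: prob_gauss prob_space_imp_sigma_finite)
  have mf: "snd \<in> measurable (NN::((real^'n::finite) \<times> (real^'d)) measure) gauss_vec" by simp
  show ?thesis using gauss_comp[of i]
    by (subst (asm) (1 2) e[symmetric]) (simp add: integrable_distr_eq[OF mf m] integral_distr[OF mf m])
qed

lemma NN_lin:
  fixes a :: real and c :: "real^'n::finite" and d :: "real^'d::finite"
  shows "integrable (NN :: ((real^'n) \<times> (real^'d)) measure) (\<lambda>y. a + c \<bullet> fst y + d \<bullet> snd y) \<and> integral\<^sup>L (NN :: ((real^'n) \<times> (real^'d)) measure) (\<lambda>y. a + c \<bullet> fst y + d \<bullet> snd y) = a"
proof -
  have f1: "\<And>i. integrable (NN :: ((real^'n) \<times> (real^'d)) measure) (\<lambda>y. fst y $ i)"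
   and f2: "\<And>i. integral\<^sup>L (NN :: ((real^'n) \<times> (real^'d)) measure) (\<lambda>y. fst y $ i) = 0"
   and s1: "\<And>i. integrable (NN :: ((real^'n) \<times> (real^'d)) measure) (\<lambda>y. snd y $ i)"
   and s2: "\<And>i. integral\<^sup>L (NN :: ((real^'n) \<times> (real^'d)) measure) (\<lambda>y. snd y $ i) = 0"
    using NN_fst NN_snd by blast+
  have i1: "integrable (NN :: ((real^'n) \<times> (real^'d)) measure) (\<lambda>y. c \<bullet> fst y)" unfolding inner_vec_def
    using f1 by (auto intro!: integrable_sum integrable_mult_right)
  have i2: "integrable (NN :: ((real^'n) \<times> (real^'d)) measure) (\<lambda>y. d \<bullet> snd y)" unfolding inner_vec_def
    using s1 by (auto intro!: integrable_sum integrable_mult_right)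
  have j1: "integral\<^sup>L (NN :: ((real^'n) \<times> (real^'d)) measure) (\<lambda>y. c \<bullet> fst y) = 0" unfolding inner_vec_def
    using f1 f2 by (simp add: inner_real_def integral_sum)
  have j2: "integral\<^sup>L (NN :: ((real^'n) \<times> (real^'d)) measure) (\<lambda>y. d \<bullet> snd y) = 0" unfolding inner_vec_def
    using s1 s2 by (simp add: inner_real_def integral_sum)
  interpret prob_space "NN :: ((real^'n) \<times> (real^'d)) measure" by (rule prob_NN)
  show ?thesis using i1 i2 j1 j2 by (simp add: integral_add prob_space)
qed



lemma pointwise_int:
  fixes h :: "'a \<Rightarrow> real"
  assumes hi: "integrable M h" and ha: "integral\<^sup>L M h = a"
  shows "(\<integral>\<^sup>+y. ennreal (h y) \<partial>M) + ennreal (-a) = (\<integral>\<^sup>+y. ennreal (- h y) \<partial>M) + ennreal a"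
    and "ennreal (-a) \<le> (\<integral>\<^sup>+y. ennreal (- h y) \<partial>M)"
proof -
  define X where "X = (\<integral>\<^sup>+y. ennreal (h y) \<partial>M)"
  define Y where "Y = (\<integral>\<^sup>+y. ennreal (- h y) \<partial>M)"
  have fin: "X \<noteq> \<infinity>" "Y \<noteq> \<infinity>" using hi unfolding real_integrable_def X_def Y_def by auto
  have a: "a = enn2real X - enn2real Y" using real_lebesgue_integral_def[OF hi] ha X_def Y_def by simp
  have X: "X = ennreal (enn2real X)" and Y: "Y = ennreal (enn2real Y)" using fin by (auto simp: ennreal_enn2real_if)
  have p: "enn2real X \<ge> 0" "enn2real Y \<ge> 0" by auto
  show "X + ennreal (-a) = Y + ennreal a"
  proof (cases "a \<ge> 0")
    case True
    then have "X = ennreal (enn2real Y + a)" using X a by simp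
    then show ?thesis using True p Y by (simp add: ennreal_plus ennreal_neg)
  next
    case False
    then have "Y = ennreal (enn2real X + (-a))" using Y a by simp
    moreover have "ennreal (enn2real X + (-a)) = ennreal (enn2real X) + ennreal (-a)"
      using False p by (intro ennreal_plus) auto
    ultimately show ?thesis using False X by (simp add: ennreal_neg)
  qed
  show "ennreal (-a) \<le> Y"
  proof (cases "a \<ge> 0")
    case True then show ?thesis by (simp add: ennreal_neg)
  next
    case False
    then have "Y = ennreal (enn2real X + (-a))" using Y a by simp
    then show ?thesis using False p by (simp add: ennreal_leI)
  qed
qed

definition trm :: "(nat \<Rightarrow> ('n::finite,'d::finite) sample \<Rightarrow> real^'n) \<Rightarrow> (nat \<Rightarrow> ('n,'d) sample \<Rightarrow> real^'d) \<Rightarrow> nat \<Rightarrow> ('n,'d) sample \<Rightarrow> real" where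
  "trm c d k \<omega> = c k \<omega> \<bullet> fst (\<omega> (Suc k)) + d k \<omega> \<bullet> snd (\<omega> (Suc k))"

lemma space_noise: "space (noise_space K) = PiE {1..K} (\<lambda>_. UNIV)"
  by (simp add: noise_space_def space_PiM space_pair_measure gauss_vec_def)

lemma comp_meas: "j \<in> {1..K} \<Longrightarrow> (\<lambda>\<omega>. \<omega> j) \<in> measurable (noise_space K) NN"
  unfolding noise_space_def by (rule measurable_component_singleton)

lemma meas_trm:
  assumes "k < K" "c k \<in> borel_measurable (noise_space K)" "d k \<in> borel_measurable (noise_space K)"
  shows "trm c d k \<in> borel_measurable (noise_space K)"
proof -
  have "(\<lambda>\<omega>. \<omega> (Suc k)) \<in> measurable (noise_space K) NN" using assms by (intro comp_meas) auto
  then have m1: "(\<lambda>\<omega>. fst (\<omega> (Suc k))) \<in> measurable (noise_space K) gauss_vec"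
   and m2: "(\<lambda>\<omega>. snd (\<omega> (Suc k))) \<in> measurable (noise_space K) gauss_vec"
    using measurable_compose[OF _ measurable_fst] measurable_compose[OF _ measurable_snd] by blast+
  have m1': "(\<lambda>\<omega>. fst (\<omega> (Suc k))) \<in> borel_measurable (noise_space K)"
    using m1 by (subst measurable_cong_sets[OF refl, where N'=gauss_vec]) (auto simp: gauss_vec_def)
  have m2': "(\<lambda>\<omega>. snd (\<omega> (Suc k))) \<in> borel_measurable (noise_space K)"
    using m2 by (subst measurable_cong_sets[OF refl, where N'=gauss_vec]) (auto simp: gauss_vec_def)
  show ?thesis unfolding trm_def using assms m1' m2' by measurable
qed

lemma mart:
  fixes c :: "nat \<Rightarrow> ('n::finite,'d::finite) sample \<Rightarrow> real^'n" and d :: "nat \<Rightarrow> ('n,'d) sample \<Rightarrow> real^'d"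
  assumes mc: "\<And>k. k < K \<Longrightarrow> c k \<in> borel_measurable (noise_space K)"
   and md: "\<And>k. k < K \<Longrightarrow> d k \<in> borel_measurable (noise_space K)"
   and dc: "\<And>k \<omega> \<omega>'. k < K \<Longrightarrow> \<omega> \<in> space (noise_space K) \<Longrightarrow> \<omega>' \<in> space (noise_space K) \<Longrightarrow> (\<And>j. j \<in> {1..k} \<Longrightarrow> \<omega> j = \<omega>' j) \<Longrightarrow> c k \<omega> = c k \<omega>'"
   and dd: "\<And>k \<omega> \<omega>'. k < K \<Longrightarrow> \<omega> \<in> space (noise_space K) \<Longrightarrow> \<omega>' \<in> space (noise_space K) \<Longrightarrow> (\<And>j. j \<in> {1..k} \<Longrightarrow> \<omega> j = \<omega>' j) \<Longrightarrow> d k \<omega> = d k \<omega>'"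
  shows "n \<le> K \<Longrightarrow> (\<integral>\<^sup>+\<omega>. ennreal (\<Sum>k<n. trm c d k \<omega>) \<partial>noise_space K) \<le> (\<integral>\<^sup>+\<omega>. ennreal (- (\<Sum>k<n. trm c d k \<omega>)) \<partial>noise_space K)"
proof (induction n)
  case 0
  then show ?case by simp
next
  case (Suc n)
  define S where "S m \<omega> = (\<Sum>k<m. trm c d k \<omega>)" for m \<omega>
  have mS: "S m \<in> borel_measurable (noise_space K)" if "m \<le> K" for m
    unfolding S_def using that by (intro borel_measurable_sum meas_trm mc md) auto
  define i where "i = Suc n"
  define I where "I = {1..K} - {i}"
  have iI: "insert i I = {1..K}" "finite I" "i \<notin> I" using Suc.prems unfolding I_def i_def by auto
  have NS: "noise_space K = PiM (insert i I) (\<lambda>_. NN)" unfolding noise_space_def iI by simp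
  interpret product_sigma_finite "\<lambda>_. NN :: ((real^'n) \<times> (real^'d)) measure"
    by (auto simp: product_sigma_finite_def intro: prob_space_imp_sigma_finite prob_NN)
  interpret NNp: prob_space "NN :: ((real^'n) \<times> (real^'d)) measure" by (rule prob_NN)
  define y0 :: "(real^'n) \<times> (real^'d)" where "y0 = (0, 0)"
  have spc: "x(i:=y) \<in> space (noise_space K)" if "x \<in> space (PiM I (\<lambda>_. NN :: ((real^'n) \<times> (real^'d)) measure))" for x y
    using that unfolding NS by (auto simp: space_PiM PiE_iff space_pair_measure gauss_vec_def extensional_def)
  have upd: "(\<lambda>x. x(i:=y0)) \<in> measurable (PiM I (\<lambda>_. NN :: ((real^'n) \<times> (real^'d)) measure)) (noise_space K)"
  proof -
    have "(\<lambda>x. (x, y0)) \<in> measurable (PiM I (\<lambda>_. NN :: ((real^'n) \<times> (real^'d)) measure)) (PiM I (\<lambda>_. NN) \<Otimes>\<^sub>M NN)"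
      by (intro measurable_Pair measurable_ident_sets measurable_const) (auto simp: space_pair_measure gauss_vec_def)
    from measurable_comp[OF this measurable_add_dim] show ?thesis unfolding NS by (simp add: comp_def)
  qed
  define F where "F x = S n (x(i:=y0))" for x
  define cx where "cx x = c n (x(i:=y0))" for x
  define dx where "dx x = d n (x(i:=y0))" for x
  have eqn: "S n (x(i:=y)) = F x" if x: "x \<in> space (PiM I (\<lambda>_. NN :: ((real^'n) \<times> (real^'d)) measure))" for x y
    unfolding F_def S_def
  proof (rule sum.cong[OF refl])
    fix k assume k: "k \<in> {..<n}"
    have "c k (x(i:=y)) = c k (x(i:=y0))" "d k (x(i:=y)) = d k (x(i:=y0))"
      using k Suc.prems spc[OF x, of y] spc[OF x, of y0] by (auto simp: i_def intro!: dc dd)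
    then show "trm c d k (x(i := y)) = trm c d k (x(i := y0))"
      using k by (simp add: trm_def i_def)
  qed
  have eqs: "S (Suc n) (x(i:=y)) = F x + cx x \<bullet> fst y + dx x \<bullet> snd y" if x: "x \<in> space (PiM I (\<lambda>_. NN :: ((real^'n) \<times> (real^'d)) measure))" for x y
  proof -
    have "c n (x(i:=y)) = c n (x(i:=y0))" "d n (x(i:=y)) = d n (x(i:=y0))"
      using Suc.prems spc[OF x, of y] spc[OF x, of y0] by (auto simp: i_def intro!: dc dd)
    then show ?thesis using eqn[OF x, of y] by (simp add: S_def trm_def cx_def dx_def i_def)
  qed
  have mF: "F \<in> borel_measurable (PiM I (\<lambda>_. NN :: ((real^'n) \<times> (real^'d)) measure))"
    unfolding F_def using measurable_comp[OF upd mS[of n]] Suc.prems by (simp add: comp_def)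
  define p where "p x = (\<integral>\<^sup>+y. ennreal (S (Suc n) (x(i:=y))) \<partial>NN)" for x
  define q where "q x = (\<integral>\<^sup>+y. ennreal (- S (Suc n) (x(i:=y))) \<partial>NN)" for x
  have mSS: "(\<lambda>\<omega>. ennreal (S (Suc n) \<omega>)) \<in> borel_measurable (PiM (insert i I) (\<lambda>_. NN))"
            "(\<lambda>\<omega>. ennreal (- S (Suc n) \<omega>)) \<in> borel_measurable (PiM (insert i I) (\<lambda>_. NN))"
    using mS[of "Suc n"] Suc.prems unfolding NS by auto
  have mSn: "(\<lambda>\<omega>. ennreal (S n \<omega>)) \<in> borel_measurable (PiM (insert i I) (\<lambda>_. NN))"
            "(\<lambda>\<omega>. ennreal (- S n \<omega>)) \<in> borel_measurable (PiM (insert i I) (\<lambda>_. NN))"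
    using mS[of "n"] Suc.prems unfolding NS by auto
  have mp: "p \<in> borel_measurable (PiM I (\<lambda>_. NN :: ((real^'n) \<times> (real^'d)) measure))"
    unfolding p_def using mSS(1)
    by (intro sigma_finite_measure.borel_measurable_nn_integral[OF prob_space_imp_sigma_finite[OF prob_NN]]) (auto intro: measurable_comp[OF measurable_add_dim, unfolded comp_def] simp: split_beta')
  have mq: "q \<in> borel_measurable (PiM I (\<lambda>_. NN :: ((real^'n) \<times> (real^'d)) measure))"
    unfolding q_def using mSS(2)
    by (intro sigma_finite_measure.borel_measurable_nn_integral[OF prob_space_imp_sigma_finite[OF prob_NN]]) (auto intro: measurable_comp[OF measurable_add_dim, unfolded comp_def] simp: split_beta')
  have L: "(\<integral>\<^sup>+\<omega>. ennreal (S (Suc n) \<omega>) \<partial>noise_space K) = (\<integral>\<^sup>+x. p x \<partial>PiM I (\<lambda>_. NN))"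
    unfolding NS p_def by (rule product_nn_integral_insert[OF iI(2,3) mSS(1)])
  have R: "(\<integral>\<^sup>+\<omega>. ennreal (- S (Suc n) \<omega>) \<partial>noise_space K) = (\<integral>\<^sup>+x. q x \<partial>PiM I (\<lambda>_. NN))"
    unfolding NS q_def by (rule product_nn_integral_insert[OF iI(2,3) mSS(2)])
  have L0: "(\<integral>\<^sup>+\<omega>. ennreal (S n \<omega>) \<partial>noise_space K) = (\<integral>\<^sup>+x. ennreal (F x) \<partial>PiM I (\<lambda>_. NN))"
    unfolding NS
    by (subst product_nn_integral_insert[OF iI(2,3) mSn(1)]) (auto intro!: nn_integral_cong simp: eqn NNp.emeasure_space_1)
  have R0: "(\<integral>\<^sup>+\<omega>. ennreal (- S n \<omega>) \<partial>noise_space K) = (\<integral>\<^sup>+x. ennreal (- F x) \<partial>PiM I (\<lambda>_. NN))"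
    unfolding NS
    by (subst product_nn_integral_insert[OF iI(2,3) mSn(2)]) (auto intro!: nn_integral_cong simp: eqn NNp.emeasure_space_1)
  have IH: "(\<integral>\<^sup>+x. ennreal (F x) \<partial>PiM I (\<lambda>_. NN)) \<le> (\<integral>\<^sup>+x. ennreal (- F x) \<partial>PiM I (\<lambda>_. NN))"
    using Suc.IH Suc.prems L0 R0 unfolding S_def by simp
  have pw1: "p x + ennreal (- F x) = q x + ennreal (F x)" and pw2: "ennreal (- F x) \<le> q x"
    if x: "x \<in> space (PiM I (\<lambda>_. NN :: ((real^'n) \<times> (real^'d)) measure))" for x
  proof -
    have p': "p x = (\<integral>\<^sup>+y. ennreal (F x + cx x \<bullet> fst y + dx x \<bullet> snd y) \<partial>NN)"
      unfolding p_def by (rule nn_integral_cong) (simp add: eqs[OF x])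
    have q': "q x = (\<integral>\<^sup>+y. ennreal (- (F x + cx x \<bullet> fst y + dx x \<bullet> snd y)) \<partial>NN)"
      unfolding q_def by (rule nn_integral_cong) (simp add: eqs[OF x])
    note NL = NN_lin[of "F x" "cx x" "dx x"]
    show "p x + ennreal (- F x) = q x + ennreal (F x)"
      unfolding p' q' by (rule pointwise_int(1)[OF NL[THEN conjunct1] NL[THEN conjunct2]])
    show "ennreal (- F x) \<le> q x"
      unfolding q' by (rule pointwise_int(2)[OF NL[THEN conjunct1] NL[THEN conjunct2]])
  qed
  have goal: "(\<integral>\<^sup>+x. p x \<partial>PiM I (\<lambda>_. NN)) \<le> (\<integral>\<^sup>+x. q x \<partial>PiM I (\<lambda>_. NN :: ((real^'n) \<times> (real^'d)) measure))"
  proof (cases "(\<integral>\<^sup>+x. q x \<partial>PiM I (\<lambda>_. NN :: ((real^'n) \<times> (real^'d)) measure)) = \<infinity>")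
    case True then show ?thesis by simp
  next
    case False
    let ?M = "PiM I (\<lambda>_. NN :: ((real^'n) \<times> (real^'d)) measure)"
    have fin: "(\<integral>\<^sup>+x. ennreal (- F x) \<partial>?M) \<noteq> \<infinity>"
    proof -
      have "(\<integral>\<^sup>+x. ennreal (- F x) \<partial>?M) \<le> (\<integral>\<^sup>+x. q x \<partial>?M)"
        by (intro nn_integral_mono pw2)
      then show ?thesis using False by (auto simp: top_unique)
    qed
    have "(\<integral>\<^sup>+x. ennreal (- F x) \<partial>?M) + (\<integral>\<^sup>+x. p x \<partial>?M) = (\<integral>\<^sup>+x. p x + ennreal (- F x) \<partial>?M)"
      using mp mF by (subst nn_integral_add) (auto simp: add.commute)
    also have "\<dots> = (\<integral>\<^sup>+x. q x + ennreal (F x) \<partial>?M)"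
      by (intro nn_integral_cong pw1)
    also have "\<dots> = (\<integral>\<^sup>+x. q x \<partial>?M) + (\<integral>\<^sup>+x. ennreal (F x) \<partial>?M)"
      using mq mF by (subst nn_integral_add) auto
    also have "\<dots> \<le> (\<integral>\<^sup>+x. q x \<partial>?M) + (\<integral>\<^sup>+x. ennreal (- F x) \<partial>?M)"
      using IH by (rule add_left_mono)
    finally show ?thesis using fin by (simp add: add.commute ennreal_add_left_cancel_le)
  qed
  show ?case using goal L R unfolding S_def by simp
qed



lemma meas_vec_nth[measurable (raw)]:
  fixes f :: "'a \<Rightarrow> ('b::euclidean_space)^'n::finite"
  assumes "f \<in> borel_measurable M"
  shows "(\<lambda>x. f x $ i) \<in> borel_measurable M"
proof (subst borel_measurable_euclidean_space, intro ballI)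
  fix b :: 'b assume "b \<in> Basis"
  have "(\<lambda>x. f x \<bullet> axis i b) \<in> borel_measurable M" using assms by measurable
  then show "(\<lambda>x. f x $ i \<bullet> b) \<in> borel_measurable M" by (simp add: inner_axis)
qed

lemma meas_vec_comp:
  fixes f :: "'a \<Rightarrow> ('b::euclidean_space)^'n::finite"
  assumes "\<And>i. (\<lambda>x. f x $ i) \<in> borel_measurable M"
  shows "f \<in> borel_measurable M"
proof (subst borel_measurable_euclidean_space, intro ballI)
  fix b :: "'b^'n" assume "b \<in> Basis"
  then obtain i u where b: "b = axis i u" "u \<in> Basis" by (auto simp: Basis_vec_def)
  have "(\<lambda>x. f x $ i \<bullet> u) \<in> borel_measurable M" using assms by measurable
  then show "(\<lambda>x. f x \<bullet> b) \<in> borel_measurable M" by (simp add: b inner_axis)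
qed

lemma meas_mv[measurable (raw)]:
  fixes A :: "'a \<Rightarrow> real^'n::finite^'m::finite" and v :: "'a \<Rightarrow> real^'n"
  assumes "A \<in> borel_measurable M" "v \<in> borel_measurable M"
  shows "(\<lambda>x. A x *v v x) \<in> borel_measurable M"
  by (rule meas_vec_comp) (use assms in \<open>simp add: matrix_vector_mult_def\<close>)

lemma meas_vm[measurable (raw)]:
  fixes A :: "'a \<Rightarrow> real^'n::finite^'m::finite" and v :: "'a \<Rightarrow> real^'m"
  assumes "A \<in> borel_measurable M" "v \<in> borel_measurable M"
  shows "(\<lambda>x. v x v* A x) \<in> borel_measurable M"
  by (rule meas_vec_comp) (use assms in \<open>simp add: vector_matrix_mult_def\<close>)

lemma inner_mv: "(g::real^'m::finite) \<bullet> ((A::real^'n::finite^'m) *v (s *\<^sub>R z)) = s * ((g v* A) \<bullet> z)"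
  by (simp add: dot_lmul_matrix matrix_vector_mult_scaleR)

lemma filt_sets:
  assumes "k \<le> K"
  shows "sets (filt K k) \<subseteq> sets (noise_space K :: ('n::finite,'d::finite) sample measure)"
  unfolding filt_def
  by (rule sets_image_in_sets[OF refl]) (unfold noise_space_def, rule measurable_restrict_subset, use assms in auto)

lemma adm_meas:
  fixes P :: "('n::finite,'m::finite,'d::finite) market"
  assumes a: "a \<in> AdmG P \<phi>0 W0" and k: "k < horizon P"
  shows "a k \<in> borel_measurable (noise_space (horizon P))"
proof -
  have "a k \<in> measurable (filt (horizon P) k) borel" using a k by (auto simp: AdmG_def)
  moreover have "measurable (filt (horizon P) k) (borel :: ((real^'n) \<times> real) measure) \<subseteq> measurable (noise_space (horizon P)) borel"
    by (rule measurable_mono) (use filt_sets[of k "horizon P"] k in \<open>auto simp: filt_def\<close>)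
  ultimately show ?thesis by auto
qed

lemma adm_dep:
  fixes P :: "('n::finite,'m::finite,'d::finite) market"
  assumes a: "a \<in> AdmG P \<phi>0 W0" and k: "k < horizon P"
    and w: "\<omega> \<in> space (noise_space (horizon P))" "\<omega>' \<in> space (noise_space (horizon P))"
    and eq: "\<And>j. j \<in> {1..k} \<Longrightarrow> \<omega> j = \<omega>' j"
  shows "a k \<omega> = a k \<omega>'"
proof -
  let ?K = "horizon P"
  have m: "a k \<in> measurable (filt ?K k) borel" using a k by (auto simp: AdmG_def)
  have "a k -` {a k \<omega>} \<inter> space (filt ?K k) \<in> sets (filt ?K k)"
    by (rule measurable_sets[OF m]) auto
  then obtain A where A: "A \<in> sets (PiM {1..k} (\<lambda>_. NN :: ((real^'n) \<times> (real^'d)) measure))"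
     and eqA: "a k -` {a k \<omega>} \<inter> space (noise_space ?K) = (\<lambda>\<omega>. restrict \<omega> {1..k}) -` A \<inter> space (noise_space ?K)"
    unfolding filt_def
    by (subst (asm) sets_vimage_algebra2) (auto simp: space_PiM space_noise PiE_iff space_pair_measure gauss_vec_def)
  have r: "restrict \<omega> {1..k} = restrict \<omega>' {1..k}" using eq by (auto simp: restrict_def)
  have "\<omega> \<in> a k -` {a k \<omega>} \<inter> space (noise_space ?K)" using w by auto
  then have "\<omega>' \<in> (\<lambda>\<omega>. restrict \<omega> {1..k}) -` A \<inter> space (noise_space ?K)" using eqA r w by auto
  then have "\<omega>' \<in> a k -` {a k \<omega>} \<inter> space (noise_space ?K)" using eqA by blast
  then show ?thesis by simp
qed

lemma fst_meas[measurable (raw)]: "j \<in> {1..K} \<Longrightarrow> (\<lambda>\<omega>. fst (\<omega> j)) \<in> borel_measurable (noise_space K :: ('n::finite,'d::finite) sample measure)"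
proof -
  assume j: "j \<in> {1..K}"
  have "(\<lambda>\<omega>. fst (\<omega> j)) \<in> measurable (noise_space K :: ('n::finite,'d::finite) sample measure) gauss_vec"
    using measurable_compose[OF comp_meas[OF j] measurable_fst] .
  then show ?thesis by (subst measurable_cong_sets[OF refl, where N'=gauss_vec]) (auto simp: gauss_vec_def)
qed

lemma snd_meas[measurable (raw)]: "j \<in> {1..K} \<Longrightarrow> (\<lambda>\<omega>. snd (\<omega> j)) \<in> borel_measurable (noise_space K :: ('n::finite,'d::finite) sample measure)"
proof -
  assume j: "j \<in> {1..K}"
  have "(\<lambda>\<omega>. snd (\<omega> j)) \<in> measurable (noise_space K :: ('n::finite,'d::finite) sample measure) gauss_vec"
    using measurable_compose[OF comp_meas[OF j] measurable_snd] .
  then show ?thesis by (subst measurable_cong_sets[OF refl, where N'=gauss_vec]) (auto simp: gauss_vec_def)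
qed

lemma state_dep: "(\<And>j. j \<in> {1..k} \<Longrightarrow> \<omega> j = \<omega>' j) \<Longrightarrow> state P \<phi>0 \<omega> k = state P \<phi>0 \<omega>' k"
  by (induction k) (auto simp: Let_def)

lemma ret_dep: "(\<And>j. j \<in> {1..k} \<Longrightarrow> \<omega> j = \<omega>' j) \<Longrightarrow> ret P \<phi>0 \<omega> k = ret P \<phi>0 \<omega>' k"
proof (cases k)
  case (Suc k')
  assume e: "\<And>j. j \<in> {1..k} \<Longrightarrow> \<omega> j = \<omega>' j"
  then have "state P \<phi>0 \<omega> k' = state P \<phi>0 \<omega>' k'" by (intro state_dep) (auto simp: Suc)
  moreover have "\<omega> (Suc k') = \<omega>' (Suc k')" using e Suc by auto
  ultimately show ?thesis using Suc by (simp add: Let_def)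
qed simp

locale mkt =
  fixes P :: "('n::finite, 'm::finite, 'd::finite) market"
  assumes mu[measurable]: "\<And>k. muphi P k \<in> borel_measurable borel"
    and s1[measurable]: "\<And>k. sigphi1 P k \<in> borel_measurable borel"
    and s2[measurable]: "\<And>k. sigphi2 P k \<in> borel_measurable borel"
    and dr[measurable]: "\<And>k. drift P k \<in> borel_measurable borel"
    and vo[measurable]: "\<And>k. vol P k \<in> borel_measurable borel"
begin

lemma state_meas: "k \<le> K \<Longrightarrow> (\<lambda>\<omega>. state P \<phi>0 \<omega> k) \<in> borel_measurable (noise_space K)"
proof (induction k)
  case 0 then show ?case by simp
next
  case (Suc k)
  then have [measurable]: "(\<lambda>\<omega>. state P \<phi>0 \<omega> k) \<in> borel_measurable (noise_space K)" by simp
  have j: "Suc k \<in> {1..K}" using Suc by auto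
  note [measurable] = fst_meas[OF j] snd_meas[OF j]
  show ?case by (simp add: Let_def) measurable
qed

lemma ret_meas: "k \<le> K \<Longrightarrow> (\<lambda>\<omega>. ret P \<phi>0 \<omega> k) \<in> borel_measurable (noise_space K)"
proof (cases k)
  case (Suc k')
  assume "k \<le> K"
  then have [measurable]: "(\<lambda>\<omega>. state P \<phi>0 \<omega> k') \<in> borel_measurable (noise_space K)" using Suc by (intro state_meas) simp
  have j: "Suc k' \<in> {1..K}" using Suc \<open>k \<le> K\<close> by auto
  note [measurable] = fst_meas[OF j] snd_meas[OF j]
  show ?thesis unfolding Suc by (simp add: Let_def, intro meas_vec_comp) simp
qed simp

lemma wealth_meas:
  assumes am: "\<And>k. k < K \<Longrightarrow> a k \<in> borel_measurable (noise_space K)"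
  shows "k \<le> K \<Longrightarrow> (\<lambda>\<omega>. wealth P \<phi>0 W0 a \<omega> k) \<in> borel_measurable (noise_space K)"
proof (induction k)
  case 0 then show ?case by simp
next
  case (Suc k)
  then have [measurable]: "(\<lambda>\<omega>. wealth P \<phi>0 W0 a \<omega> k) \<in> borel_measurable (noise_space K)"
    "(\<lambda>\<omega>. ret P \<phi>0 \<omega> (Suc k)) \<in> borel_measurable (noise_space K)"
    "a k \<in> borel_measurable (noise_space K)"
    using ret_meas[of "Suc k" K] am[of k] by (auto simp del: ret.simps)
  have [measurable]: "(\<lambda>\<omega>. fst (a k \<omega>)) \<in> borel_measurable (noise_space K)" "(\<lambda>\<omega>. snd (a k \<omega>)) \<in> borel_measurable (noise_space K)"
  proof -
    have "a k \<in> measurable (noise_space K) (borel \<Otimes>\<^sub>M borel)" using am[of k] Suc by (simp add: borel_prod)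
    then show "(\<lambda>\<omega>. fst (a k \<omega>)) \<in> borel_measurable (noise_space K)" "(\<lambda>\<omega>. snd (a k \<omega>)) \<in> borel_measurable (noise_space K)"
      using measurable_compose[OF _ measurable_fst] measurable_compose[OF _ measurable_snd] by blast+
  qed
  show ?case unfolding wealth.simps by measurable
qed

end

lemma wealth_dep:
  assumes ad: "\<And>k \<omega> \<omega>'. k < K \<Longrightarrow> \<omega> \<in> space (noise_space K) \<Longrightarrow> \<omega>' \<in> space (noise_space K) \<Longrightarrow> (\<And>j. j \<in> {1..k} \<Longrightarrow> \<omega> j = \<omega>' j) \<Longrightarrow> a k \<omega> = a k \<omega>'"
    and w: "\<omega> \<in> space (noise_space K)" "\<omega>' \<in> space (noise_space K)"
  shows "k \<le> K \<Longrightarrow> (\<And>j. j \<in> {1..k} \<Longrightarrow> \<omega> j = \<omega>' j) \<Longrightarrow> wealth P \<phi>0 W0 a \<omega> k = wealth P \<phi>0 W0 a \<omega>' k"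
proof (induction k)
  case 0 then show ?case by simp
next
  case (Suc k)
  have "wealth P \<phi>0 W0 a \<omega> k = wealth P \<phi>0 W0 a \<omega>' k" using Suc by auto
  moreover have "ret P \<phi>0 \<omega> (Suc k) = ret P \<phi>0 \<omega>' (Suc k)" using Suc.prems by (intro ret_dep) auto
  moreover have "a k \<omega> = a k \<omega>'" using Suc.prems w by (intro ad) auto
  ultimately show ?case by simp
qed

definition cg :: "('n::finite, 'm::finite, 'd::finite) market \<Rightarrow> real \<Rightarrow> real
     \<Rightarrow> (nat \<Rightarrow> real^'m \<Rightarrow> real) \<Rightarrow> (nat \<Rightarrow> real^'m \<Rightarrow> real^'m) \<Rightarrow> ('n, 'd) policy
     \<Rightarrow> real^'m \<Rightarrow> real \<Rightarrow> (nat \<Rightarrow> ('n, 'd) sample \<Rightarrow> real) \<Rightarrow> ('n, 'd) policy \<Rightarrow> nat \<Rightarrow> ('n, 'd) sample \<Rightarrow> real^'n" where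
  "cg P \<beta> \<gamma> J gJ ahat \<phi>0 W0 fac a k \<omega> =
    (let \<phi> = state P \<phi>0 \<omega> k; Wb = wealth P \<phi>0 W0 ahat \<omega> k in
     (\<beta> powr (real k * dt P) * sqrt (dt P)) *\<^sub>R (fac k \<omega> *\<^sub>R (gJ k \<phi> v* sigphi1 P k \<phi>)
        + ((1 - \<gamma>) * Wb powr (- \<gamma>) * J k \<phi>) *\<^sub>R (fst (a k \<omega>) v* vol P k \<phi>)))"

definition dg :: "('n::finite, 'm::finite, 'd::finite) market \<Rightarrow> real
     \<Rightarrow> (nat \<Rightarrow> real^'m \<Rightarrow> real^'m)
     \<Rightarrow> real^'m \<Rightarrow> (nat \<Rightarrow> ('n, 'd) sample \<Rightarrow> real) \<Rightarrow> nat \<Rightarrow> ('n, 'd) sample \<Rightarrow> real^'d" where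
  "dg P \<beta> gJ \<phi>0 fac k \<omega> =
    (let \<phi> = state P \<phi>0 \<omega> k in
     (\<beta> powr (real k * dt P) * sqrt (dt P) * fac k \<omega>) *\<^sub>R (gJ k \<phi> v* sigphi2 P k \<phi>))"

definition fac1 where "fac1 P \<gamma> ahat \<phi>0 W0 k \<omega> = wealth P \<phi>0 W0 ahat \<omega> k powr (1 - \<gamma>)"

definition fac2 where "fac2 P \<gamma> ahat \<phi>0 W0 a k \<omega> =
   (let Wb = wealth P \<phi>0 W0 ahat \<omega> k in
   (if k = 0 then Wb powr (1 - \<gamma>)
                    else Wb powr (1 - \<gamma>) + (1 - \<gamma>) * Wb powr (- \<gamma>) *
                      ((\<Sum>i\<in>UNIV. (ret P \<phi>0 \<omega> k $ i - Rf P) *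
                           (fst (a (k - 1) \<omega>) $ i - fst (ahat (k - 1) \<omega>) $ i))
                       - (snd (a (k - 1) \<omega>) - snd (ahat (k - 1) \<omega>)))))"

lemma pen1_eq: "penalty1 P \<beta> \<gamma> J gJ ahat \<phi>0 W0 a \<omega> =
   (\<Sum>k<horizon P. trm (cg P \<beta> \<gamma> J gJ ahat \<phi>0 W0 (fac1 P \<gamma> ahat \<phi>0 W0) a) (dg P \<beta> gJ \<phi>0 (fac1 P \<gamma> ahat \<phi>0 W0)) k \<omega>)"
  unfolding penalty1_def trm_def cg_def dg_def fac1_def
  by (rule sum.cong[OF refl]) (simp add: Let_def matrix_vector_mult_scaleR dot_lmul_matrix[symmetric] inner_add_left algebra_simps)

lemma pen2_eq: "penalty2 P \<beta> \<gamma> J gJ ahat \<phi>0 W0 a \<omega> =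
   (\<Sum>k<horizon P. trm (cg P \<beta> \<gamma> J gJ ahat \<phi>0 W0 (fac2 P \<gamma> ahat \<phi>0 W0 a) a) (dg P \<beta> gJ \<phi>0 (fac2 P \<gamma> ahat \<phi>0 W0 a)) k \<omega>)"
  unfolding penalty2_def trm_def cg_def dg_def
  by (rule sum.cong[OF refl]) (simp add: Let_def matrix_vector_mult_scaleR dot_lmul_matrix[symmetric] inner_add_left algebra_simps fac2_def)


lemma adm_fs_meas:
  fixes P :: "('n::finite,'m::finite,'d::finite) market"
  assumes a: "a \<in> AdmG P \<phi>0 W0" and k: "k < horizon P"
  shows "(\<lambda>\<omega>. fst (a k \<omega>)) \<in> borel_measurable (noise_space (horizon P))"
        "(\<lambda>\<omega>. snd (a k \<omega>)) \<in> borel_measurable (noise_space (horizon P))"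
proof -
  have "a k \<in> measurable (noise_space (horizon P)) (borel \<Otimes>\<^sub>M borel)" using adm_meas[OF a k] by (simp add: borel_prod)
  then show "(\<lambda>\<omega>. fst (a k \<omega>)) \<in> borel_measurable (noise_space (horizon P))" "(\<lambda>\<omega>. snd (a k \<omega>)) \<in> borel_measurable (noise_space (horizon P))"
    using measurable_compose[OF _ measurable_fst] measurable_compose[OF _ measurable_snd] by blast+
qed

context mkt
begin

lemma wealth_adm_meas: "a \<in> AdmG P \<phi>0 W0 \<Longrightarrow> k \<le> horizon P \<Longrightarrow> (\<lambda>\<omega>. wealth P \<phi>0 W0 a \<omega> k) \<in> borel_measurable (noise_space (horizon P))"
  by (rule wealth_meas) (auto intro: adm_meas)

lemma wealth_adm_dep: "a \<in> AdmG P \<phi>0 W0 \<Longrightarrow> k \<le> horizon P \<Longrightarrow> \<omega> \<in> space (noise_space (horizon P)) \<Longrightarrow> \<omega>' \<in> space (noise_space (horizon P))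
   \<Longrightarrow> (\<And>j. j \<in> {1..k} \<Longrightarrow> \<omega> j = \<omega>' j) \<Longrightarrow> wealth P \<phi>0 W0 a \<omega> k = wealth P \<phi>0 W0 a \<omega>' k"
  by (rule wealth_dep[where K="horizon P"]) (auto intro: adm_dep)

lemma cgdg_meas:
  fixes J :: "nat \<Rightarrow> real^'m \<Rightarrow> real" and gJ :: "nat \<Rightarrow> real^'m \<Rightarrow> real^'m"
  assumes J[measurable]: "\<And>k. J k \<in> borel_measurable borel" and gJ[measurable]: "\<And>k. gJ k \<in> borel_measurable borel"
    and ahat: "ahat \<in> AdmG P \<phi>0 W0" and a: "a \<in> AdmG P \<phi>0 W0"
    and facm: "\<And>k. k < horizon P \<Longrightarrow> fac k \<in> borel_measurable (noise_space (horizon P))"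
    and k: "k < horizon P"
  shows "cg P \<beta> \<gamma> J gJ ahat \<phi>0 W0 fac a k \<in> borel_measurable (noise_space (horizon P))"
    "dg P \<beta> gJ \<phi>0 fac k \<in> borel_measurable (noise_space (horizon P))"
proof -
  have [measurable]: "(\<lambda>\<omega>. state P \<phi>0 \<omega> k) \<in> borel_measurable (noise_space (horizon P))"
    using k by (intro state_meas) simp
  have [measurable]: "(\<lambda>\<omega>. wealth P \<phi>0 W0 ahat \<omega> k) \<in> borel_measurable (noise_space (horizon P))"
    using k ahat by (intro wealth_adm_meas) auto
  note [measurable] = adm_fs_meas[OF a k] facm[OF k]
  show "cg P \<beta> \<gamma> J gJ ahat \<phi>0 W0 fac a k \<in> borel_measurable (noise_space (horizon P))"
    unfolding cg_def Let_def by measurable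
  show "dg P \<beta> gJ \<phi>0 fac k \<in> borel_measurable (noise_space (horizon P))"
    unfolding dg_def Let_def by measurable
qed

lemma pen_gen_meas:
  fixes J :: "nat \<Rightarrow> real^'m \<Rightarrow> real" and gJ :: "nat \<Rightarrow> real^'m \<Rightarrow> real^'m"
  assumes J[measurable]: "\<And>k. J k \<in> borel_measurable borel" and gJ[measurable]: "\<And>k. gJ k \<in> borel_measurable borel"
    and ahat: "ahat \<in> AdmG P \<phi>0 W0" and a: "a \<in> AdmG P \<phi>0 W0"
    and facm: "\<And>k. k < horizon P \<Longrightarrow> fac k \<in> borel_measurable (noise_space (horizon P))"
  shows "(\<lambda>\<omega>. \<Sum>k<horizon P. trm (cg P \<beta> \<gamma> J gJ ahat \<phi>0 W0 fac a) (dg P \<beta> gJ \<phi>0 fac) k \<omega>) \<in> borel_measurable (noise_space (horizon P))"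
  using cgdg_meas[OF J gJ ahat a facm] by (intro borel_measurable_sum meas_trm) auto

lemma feas_gen:
  fixes J :: "nat \<Rightarrow> real^'m \<Rightarrow> real" and gJ :: "nat \<Rightarrow> real^'m \<Rightarrow> real^'m"
  assumes J[measurable]: "\<And>k. J k \<in> borel_measurable borel" and gJ[measurable]: "\<And>k. gJ k \<in> borel_measurable borel"
    and ahat: "ahat \<in> AdmG P \<phi>0 W0" and a: "a \<in> AdmG P \<phi>0 W0"
    and facm: "\<And>k. k < horizon P \<Longrightarrow> fac k \<in> borel_measurable (noise_space (horizon P))"
    and facd: "\<And>k \<omega> \<omega>'. k < horizon P \<Longrightarrow> \<omega> \<in> space (noise_space (horizon P)) \<Longrightarrow> \<omega>' \<in> space (noise_space (horizon P))
        \<Longrightarrow> (\<And>j. j \<in> {1..k} \<Longrightarrow> \<omega> j = \<omega>' j) \<Longrightarrow> fac k \<omega> = fac k \<omega>'"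
  shows "(\<integral>\<^sup>+\<omega>. ennreal (\<Sum>k<horizon P. trm (cg P \<beta> \<gamma> J gJ ahat \<phi>0 W0 fac a) (dg P \<beta> gJ \<phi>0 fac) k \<omega>) \<partial>noise_space (horizon P))
      \<le> (\<integral>\<^sup>+\<omega>. ennreal (- (\<Sum>k<horizon P. trm (cg P \<beta> \<gamma> J gJ ahat \<phi>0 W0 fac a) (dg P \<beta> gJ \<phi>0 fac) k \<omega>)) \<partial>noise_space (horizon P))"
proof (rule mart[OF _ _ _ _ order.refl])
  fix k assume k: "k < horizon P"
  show "cg P \<beta> \<gamma> J gJ ahat \<phi>0 W0 fac a k \<in> borel_measurable (noise_space (horizon P))"
    "dg P \<beta> gJ \<phi>0 fac k \<in> borel_measurable (noise_space (horizon P))"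
    using cgdg_meas[OF J gJ ahat a facm k] by auto
next
  fix k and \<omega> \<omega>' :: "('n,'d) sample" assume k: "k < horizon P" and w: "\<omega> \<in> space (noise_space (horizon P))" "\<omega>' \<in> space (noise_space (horizon P))"
    and e: "\<And>j. j \<in> {1..k} \<Longrightarrow> \<omega> j = \<omega>' j"
  have "state P \<phi>0 \<omega> k = state P \<phi>0 \<omega>' k" using e by (rule state_dep)
  moreover have "wealth P \<phi>0 W0 ahat \<omega> k = wealth P \<phi>0 W0 ahat \<omega>' k"
    using k w e ahat by (intro wealth_adm_dep) auto
  moreover have "fac k \<omega> = fac k \<omega>'" using k w e by (rule facd)
  moreover have "a k \<omega> = a k \<omega>'" using a k w e by (rule adm_dep)
  ultimately show "cg P \<beta> \<gamma> J gJ ahat \<phi>0 W0 fac a k \<omega> = cg P \<beta> \<gamma> J gJ ahat \<phi>0 W0 fac a k \<omega>'"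
    and "dg P \<beta> gJ \<phi>0 fac k \<omega> = dg P \<beta> gJ \<phi>0 fac k \<omega>'"
    unfolding cg_def dg_def by (simp_all add: Let_def)
qed

lemma fac1_ok:
  assumes ahat: "ahat \<in> AdmG P \<phi>0 W0"
  shows "\<And>k. k < horizon P \<Longrightarrow> fac1 P \<gamma> ahat \<phi>0 W0 k \<in> borel_measurable (noise_space (horizon P))"
    and "\<And>k \<omega> \<omega>'. k < horizon P \<Longrightarrow> \<omega> \<in> space (noise_space (horizon P)) \<Longrightarrow> \<omega>' \<in> space (noise_space (horizon P))
        \<Longrightarrow> (\<And>j. j \<in> {1..k} \<Longrightarrow> \<omega> j = \<omega>' j) \<Longrightarrow> fac1 P \<gamma> ahat \<phi>0 W0 k \<omega> = fac1 P \<gamma> ahat \<phi>0 W0 k \<omega>'"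
proof -
  fix k assume k: "k < horizon P"
  have [measurable]: "(\<lambda>\<omega>. wealth P \<phi>0 W0 ahat \<omega> k) \<in> borel_measurable (noise_space (horizon P))"
    using k ahat by (intro wealth_adm_meas) auto
  show "fac1 P \<gamma> ahat \<phi>0 W0 k \<in> borel_measurable (noise_space (horizon P))"
    unfolding fac1_def[abs_def] by measurable
next
  fix k and \<omega> \<omega>' :: "('n,'d) sample" assume k: "k < horizon P" and w: "\<omega> \<in> space (noise_space (horizon P))" "\<omega>' \<in> space (noise_space (horizon P))"
    and e: "\<And>j. j \<in> {1..k} \<Longrightarrow> \<omega> j = \<omega>' j"
  have "wealth P \<phi>0 W0 ahat \<omega> k = wealth P \<phi>0 W0 ahat \<omega>' k"
    using k w e ahat by (intro wealth_adm_dep) auto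
  then show "fac1 P \<gamma> ahat \<phi>0 W0 k \<omega> = fac1 P \<gamma> ahat \<phi>0 W0 k \<omega>'" by (simp add: fac1_def)
qed

lemma fac2_ok:
  assumes ahat: "ahat \<in> AdmG P \<phi>0 W0" and a: "a \<in> AdmG P \<phi>0 W0"
  shows "\<And>k. k < horizon P \<Longrightarrow> fac2 P \<gamma> ahat \<phi>0 W0 a k \<in> borel_measurable (noise_space (horizon P))"
    and "\<And>k \<omega> \<omega>'. k < horizon P \<Longrightarrow> \<omega> \<in> space (noise_space (horizon P)) \<Longrightarrow> \<omega>' \<in> space (noise_space (horizon P))
        \<Longrightarrow> (\<And>j. j \<in> {1..k} \<Longrightarrow> \<omega> j = \<omega>' j) \<Longrightarrow> fac2 P \<gamma> ahat \<phi>0 W0 a k \<omega> = fac2 P \<gamma> ahat \<phi>0 W0 a k \<omega>'"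
proof -
  fix k assume k: "k < horizon P"
  have [measurable]: "(\<lambda>\<omega>. wealth P \<phi>0 W0 ahat \<omega> k) \<in> borel_measurable (noise_space (horizon P))"
    using k ahat by (intro wealth_adm_meas) auto
  show "fac2 P \<gamma> ahat \<phi>0 W0 a k \<in> borel_measurable (noise_space (horizon P))"
  proof (cases k)
    case 0 then show ?thesis unfolding fac2_def[abs_def] Let_def by simp
  next
    case (Suc k')
    have [measurable]: "(\<lambda>\<omega>. ret P \<phi>0 \<omega> k) \<in> borel_measurable (noise_space (horizon P))"
      using k by (intro ret_meas) simp
    have k': "k' < horizon P" using Suc k by simp
    note [measurable] = adm_fs_meas[OF a k'] adm_fs_meas[OF ahat k']
    have nz: "k \<noteq> 0" using Suc by simp
    have km: "k - 1 = k'" using Suc by simp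
    show ?thesis unfolding fac2_def[abs_def] Let_def if_not_P[OF nz] km by measurable
  qed
next
  fix k and \<omega> \<omega>' :: "('n,'d) sample" assume k: "k < horizon P" and w: "\<omega> \<in> space (noise_space (horizon P))" "\<omega>' \<in> space (noise_space (horizon P))"
    and e: "\<And>j. j \<in> {1..k} \<Longrightarrow> \<omega> j = \<omega>' j"
  have "wealth P \<phi>0 W0 ahat \<omega> k = wealth P \<phi>0 W0 ahat \<omega>' k"
    using k w e ahat by (intro wealth_adm_dep) auto
  moreover have "ret P \<phi>0 \<omega> k = ret P \<phi>0 \<omega>' k" using e by (rule ret_dep)
  moreover have "k \<noteq> 0 \<Longrightarrow> a (k - 1) \<omega> = a (k - 1) \<omega>'" using k w e by (intro adm_dep[OF a]) auto
  moreover have "k \<noteq> 0 \<Longrightarrow> ahat (k - 1) \<omega> = ahat (k - 1) \<omega>'" using k w e by (intro adm_dep[OF ahat]) auto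
  ultimately show "fac2 P \<gamma> ahat \<phi>0 W0 a k \<omega> = fac2 P \<gamma> ahat \<phi>0 W0 a k \<omega>'" by (simp add: fac2_def Let_def)
qed

end



lemma bound_gen:
  fixes P :: "('n::finite, 'm::finite, 'd::finite) market"
  assumes df: "dual_feasible P \<phi>0 W0 M" and reg: "dual_bound_regular P \<alpha> \<beta> \<gamma> \<phi>0 W0 M"
    and mM: "\<And>a. a \<in> AdmG P \<phi>0 W0 \<Longrightarrow> M a \<in> borel_measurable (noise_space (horizon P))"
    and ne: "AdmG P \<phi>0 W0 \<noteq> {}"
  shows "H0 P \<alpha> \<beta> \<gamma> \<phi>0 W0 \<le> LM P \<alpha> \<beta> \<gamma> \<phi>0 W0 M"
  unfolding H0_def LM_def
proof (rule cSUP_least[OF ne])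
  fix a assume a: "a \<in> AdmG P \<phi>0 W0"
  let ?N = "noise_space (horizon P) :: ('n,'d) sample measure"
  let ?R = "reward P \<alpha> \<beta> \<gamma> \<phi>0 W0 a"
  let ?I = "inner_sup P \<alpha> \<beta> \<gamma> \<phi>0 W0 M"
  have ri: "integrable ?N ?R" and ii: "integrable ?N ?I" using reg a unfolding dual_bound_regular_def by auto
  have aA: "a \<in> Adm P \<phi>0 W0" using a by (simp add: AdmG_def)
  have le: "?R \<omega> - M a \<omega> \<le> ?I \<omega>" if w: "\<omega> \<in> space ?N" for \<omega>
  proof -
    have "bdd_above ((\<lambda>a. reward P \<alpha> \<beta> \<gamma> \<phi>0 W0 a \<omega> - M a \<omega>) ` Adm P \<phi>0 W0)"
      using reg w unfolding dual_bound_regular_def by auto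
    then show ?thesis unfolding inner_sup_def by (rule cSUP_upper[OF aA])
  qed
  have idiff: "integrable ?N (\<lambda>\<omega>. ?I \<omega> - ?R \<omega>)" using ri ii by auto
  have f1: "(\<integral>\<^sup>+\<omega>. ennreal (?I \<omega> - ?R \<omega>) \<partial>?N) \<noteq> \<infinity>"
    using idiff unfolding real_integrable_def by auto
  have n1: "(\<integral>\<^sup>+\<omega>. ennreal (- M a \<omega>) \<partial>?N) \<le> (\<integral>\<^sup>+\<omega>. ennreal (?I \<omega> - ?R \<omega>) \<partial>?N)"
  proof (intro nn_integral_mono ennreal_leI)
    fix x assume "x \<in> space ?N"
    from le[OF this] show "- M a x \<le> ?I x - ?R x" by linarith
  qed
  have fneg: "(\<integral>\<^sup>+\<omega>. ennreal (- M a \<omega>) \<partial>?N) \<noteq> \<infinity>" using n1 f1 by (auto simp: top_unique)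
  have dfa: "(\<integral>\<^sup>+\<omega>. ennreal (M a \<omega>) \<partial>?N) \<le> (\<integral>\<^sup>+\<omega>. ennreal (- M a \<omega>) \<partial>?N)"
    using df a unfolding dual_feasible_def by auto
  have fpos: "(\<integral>\<^sup>+\<omega>. ennreal (M a \<omega>) \<partial>?N) \<noteq> \<infinity>" using dfa fneg by (auto simp: top_unique)
  have Mi: "integrable ?N (M a)" unfolding real_integrable_def using mM[OF a] fpos fneg by (auto simp: less_top)
  have M0: "integral\<^sup>L ?N (M a) \<le> 0"
    unfolding real_lebesgue_integral_def[OF Mi] using dfa fneg by (auto intro: enn2real_mono simp: less_top)
  have "integral\<^sup>L ?N ?R \<le> integral\<^sup>L ?N (\<lambda>\<omega>. ?I \<omega> + M a \<omega>)"
    using ri ii Mi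
  proof (intro integral_mono)
    fix x assume "x \<in> space ?N"
    from le[OF this] show "?R x \<le> ?I x + M a x" by linarith
  qed auto
  also have "\<dots> = integral\<^sup>L ?N ?I + integral\<^sup>L ?N (M a)" using ii Mi by simp
  also have "\<dots> \<le> integral\<^sup>L ?N ?I" using M0 by simp
  finally show "integral\<^sup>L ?N ?R \<le> integral\<^sup>L ?N ?I" .
qed

theorem proposition4:
  fixes P :: "('n::finite, 'm::finite, 'd::finite) market"
    and \<alpha> \<beta> \<gamma> W0 :: real and \<phi>0 :: "real^'m"
    and J :: "nat \<Rightarrow> real^'m \<Rightarrow> real" and gJ :: "nat \<Rightarrow> real^'m \<Rightarrow> real^'m"
    and ahat :: "('n, 'd) policy"
  assumes "dt P > 0" and "\<gamma> > 0" and "0 \<le> \<alpha>" and "\<alpha> \<le> 1"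
    and "\<And>k. muphi P k \<in> borel_measurable borel"
    and "\<And>k. sigphi1 P k \<in> borel_measurable borel"
    and "\<And>k. sigphi2 P k \<in> borel_measurable borel"
    and "\<And>k. drift P k \<in> borel_measurable borel"
    and "\<And>k. vol P k \<in> borel_measurable borel"
    and "\<And>k. J k \<in> borel_measurable borel"
    and "\<And>k. gJ k \<in> borel_measurable borel"
    and ahat: "ahat \<in> AdmG P \<phi>0 W0"
  shows "dual_feasible P \<phi>0 W0 (penalty1 P \<beta> \<gamma> J gJ ahat \<phi>0 W0)
       \<and> dual_feasible P \<phi>0 W0 (penalty2 P \<beta> \<gamma> J gJ ahat \<phi>0 W0)
       \<and> (dual_bound_regular P \<alpha> \<beta> \<gamma> \<phi>0 W0 (penalty1 P \<beta> \<gamma> J gJ ahat \<phi>0 W0)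
            \<longrightarrow> H0 P \<alpha> \<beta> \<gamma> \<phi>0 W0 \<le> LM P \<alpha> \<beta> \<gamma> \<phi>0 W0 (penalty1 P \<beta> \<gamma> J gJ ahat \<phi>0 W0))
       \<and> (dual_bound_regular P \<alpha> \<beta> \<gamma> \<phi>0 W0 (penalty2 P \<beta> \<gamma> J gJ ahat \<phi>0 W0)
            \<longrightarrow> H0 P \<alpha> \<beta> \<gamma> \<phi>0 W0 \<le> LM P \<alpha> \<beta> \<gamma> \<phi>0 W0 (penalty2 P \<beta> \<gamma> J gJ ahat \<phi>0 W0))"
proof -
  interpret mkt P using assms(5-9) by unfold_locales auto
  note Jm = assms(10) and gJm = assms(11)
  have ne: "AdmG P \<phi>0 W0 \<noteq> {}" using ahat by auto
  have d1: "dual_feasible P \<phi>0 W0 (penalty1 P \<beta> \<gamma> J gJ ahat \<phi>0 W0)"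
    unfolding dual_feasible_def pen1_eq
  proof (intro ballI)
    fix a assume a: "a \<in> AdmG P \<phi>0 W0"
    show "(\<integral>\<^sup>+\<omega>. ennreal (\<Sum>k<horizon P. trm (cg P \<beta> \<gamma> J gJ ahat \<phi>0 W0 (fac1 P \<gamma> ahat \<phi>0 W0) a) (dg P \<beta> gJ \<phi>0 (fac1 P \<gamma> ahat \<phi>0 W0)) k \<omega>) \<partial>noise_space (horizon P))
      \<le> (\<integral>\<^sup>+\<omega>. ennreal (- (\<Sum>k<horizon P. trm (cg P \<beta> \<gamma> J gJ ahat \<phi>0 W0 (fac1 P \<gamma> ahat \<phi>0 W0) a) (dg P \<beta> gJ \<phi>0 (fac1 P \<gamma> ahat \<phi>0 W0)) k \<omega>)) \<partial>noise_space (horizon P))"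
      by (rule feas_gen[OF Jm gJm ahat a fac1_ok(1)[OF ahat] fac1_ok(2)[OF ahat]])
  qed
  have d2: "dual_feasible P \<phi>0 W0 (penalty2 P \<beta> \<gamma> J gJ ahat \<phi>0 W0)"
    unfolding dual_feasible_def pen2_eq
  proof (intro ballI)
    fix a assume a: "a \<in> AdmG P \<phi>0 W0"
    show "(\<integral>\<^sup>+\<omega>. ennreal (\<Sum>k<horizon P. trm (cg P \<beta> \<gamma> J gJ ahat \<phi>0 W0 (fac2 P \<gamma> ahat \<phi>0 W0 a) a) (dg P \<beta> gJ \<phi>0 (fac2 P \<gamma> ahat \<phi>0 W0 a)) k \<omega>) \<partial>noise_space (horizon P))
      \<le> (\<integral>\<^sup>+\<omega>. ennreal (- (\<Sum>k<horizon P. trm (cg P \<beta> \<gamma> J gJ ahat \<phi>0 W0 (fac2 P \<gamma> ahat \<phi>0 W0 a) a) (dg P \<beta> gJ \<phi>0 (fac2 P \<gamma> ahat \<phi>0 W0 a)) k \<omega>)) \<partial>noise_space (horizon P))"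
      by (rule feas_gen[OF Jm gJm ahat a fac2_ok(1)[OF ahat a] fac2_ok(2)[OF ahat a]])
  qed
  have m1: "penalty1 P \<beta> \<gamma> J gJ ahat \<phi>0 W0 a \<in> borel_measurable (noise_space (horizon P))"
    if a: "a \<in> AdmG P \<phi>0 W0" for a
    unfolding pen1_eq[abs_def] by (rule pen_gen_meas[OF Jm gJm ahat a fac1_ok(1)[OF ahat]])
  have m2: "penalty2 P \<beta> \<gamma> J gJ ahat \<phi>0 W0 a \<in> borel_measurable (noise_space (horizon P))"
    if a: "a \<in> AdmG P \<phi>0 W0" for a
    unfolding pen2_eq[abs_def] by (rule pen_gen_meas[OF Jm gJm ahat a fac2_ok(1)[OF ahat a]])
  show ?thesis using d1 d2 bound_gen[OF d1 _ m1 ne] bound_gen[OF d2 _ m2 ne] by blast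
qed


end
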